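(* Let $s(n)$ denote the number of unlabeled semimodular lattices with $n$ elements. Then $s(n) \ge \Omega(2.5080^n)$, i.e., there is a constant $b>0$ such that $s(n) \ge b \cdot 2.5080^n$ for all sufficiently large $n$.
   Context: All lattices are finite and nonempty, counted up to isomorphism. Semimodular means upper semimodular. *)

theory Defs
  imports Complex_Main
begin

text \<open>A finite lattice with n elements is represented by an order relation R on the
carrier {..<n}. Lattices are nonempty, so n > 0 is required.\<close>

definition is_lub :: "nat \<Rightarrow> (nat \<times> nat) set \<Rightarrow> nat \<Rightarrow> nat \<Rightarrow> nat \<Rightarrow> bool" where
  "is_lub n R a b j \<longleftrightarrow> j < n \<and> (a, j) \<in> R \<and> (b, j) \<in> R \<and>
     (\<forall>u<n. (a, u) \<in> R \<and> (b, u) \<in> R \<longrightarrow> (j, u) \<in> R)"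

definition is_glb :: "nat \<Rightarrow> (nat \<times> nat) set \<Rightarrow> nat \<Rightarrow> nat \<Rightarrow> nat \<Rightarrow> bool" where
  "is_glb n R a b m \<longleftrightarrow> m < n \<and> (m, a) \<in> R \<and> (m, b) \<in> R \<and>
     (\<forall>u<n. (u, a) \<in> R \<and> (u, b) \<in> R \<longrightarrow> (u, m) \<in> R)"

definition lattice_order :: "nat \<Rightarrow> (nat \<times> nat) set \<Rightarrow> bool" where
  "lattice_order n R \<longleftrightarrow> 0 < n \<and> R \<subseteq> {..<n} \<times> {..<n} \<and> partial_order_on {..<n} R \<and>
     (\<forall>a<n. \<forall>b<n. (\<exists>j. is_lub n R a b j) \<and> (\<exists>m. is_glb n R a b m))"

definition covers :: "nat \<Rightarrow> (nat \<times> nat) set \<Rightarrow> nat \<Rightarrow> nat \<Rightarrow> bool" where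
  "covers n R x y \<longleftrightarrow> x < n \<and> y < n \<and> (x, y) \<in> R \<and> x \<noteq> y \<and>
     \<not> (\<exists>z<n. (x, z) \<in> R \<and> (z, y) \<in> R \<and> z \<noteq> x \<and> z \<noteq> y)"

definition semimodular_lattice :: "nat \<Rightarrow> (nat \<times> nat) set \<Rightarrow> bool" where
  "semimodular_lattice n R \<longleftrightarrow> lattice_order n R \<and>
     (\<forall>a<n. \<forall>b<n. \<forall>m j. is_glb n R a b m \<longrightarrow> is_lub n R a b j \<longrightarrow>
        covers n R m a \<longrightarrow> covers n R b j)"

definition order_iso :: "nat \<Rightarrow> (nat \<times> nat) set \<Rightarrow> (nat \<times> nat) set \<Rightarrow> bool" where
  "order_iso n R R' \<longleftrightarrow> (\<exists>f. bij_betw f {..<n} {..<n} \<and>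
     (\<forall>x<n. \<forall>y<n. (x, y) \<in> R \<longleftrightarrow> (f x, f y) \<in> R'))"

definition semimod_lattices :: "nat \<Rightarrow> (nat \<times> nat) set set" where
  "semimod_lattices n = {R. semimodular_lattice n R}"

definition s_count :: "nat \<Rightarrow> nat" where
  "s_count n = card ((\<lambda>R. {R' \<in> semimod_lattices n. order_iso n R R'}) ` semimod_lattices n)"

end

theory Submission imports Defs "HOL-Combinatorics.Permutations" begin

lemma lub_set_ex:
  assumes "finite S" "S \<noteq> {}" "S \<subseteq> {..<n}" "trans R" "\<forall>a<n. (a,a) \<in> R"
    "\<forall>a<n. \<forall>b<n. \<exists>j. is_lub n R a b j"
  shows "\<exists>j<n. (\<forall>s\<in>S. (s,j)\<in>R) \<and> (\<forall>u<n. (\<forall>s\<in>S. (s,u)\<in>R) \<longrightarrow> (j,u)\<in>R)"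
  using assms(1,2,3)
proof (induction S rule: finite_ne_induct)
  case (singleton a)
  then show ?case using assms(5) by auto
next
  case (insert a S)
  then obtain j0 where j0: "j0 < n" "\<forall>s\<in>S. (s,j0)\<in>R" "\<forall>u<n. (\<forall>s\<in>S. (s,u)\<in>R) \<longrightarrow> (j0,u)\<in>R"
    by auto
  have a: "a < n" using insert by auto
  obtain j where j: "is_lub n R a j0 j" using assms(6) a j0(1) by blast
  have "j < n" "(a, j) \<in> R" "(j0, j) \<in> R" "\<forall>u<n. (a,u)\<in>R \<and> (j0,u)\<in>R \<longrightarrow> (j,u)\<in>R"
    using j unfolding is_lub_def by auto
  moreover have "\<forall>s\<in>S. (s,j)\<in>R" using j0(2) \<open>(j0, j) \<in> R\<close> assms(4) unfolding trans_def by blast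
  moreover have "\<forall>u<n. (\<forall>s\<in>insert a S. (s,u)\<in>R) \<longrightarrow> (j,u)\<in>R"
    using j0(3) calculation(4) by auto
  ultimately show ?case by auto
qed

lemma glb_ex:
  assumes "z < n" "\<forall>x<n. (z,x)\<in>R" "trans R" "\<forall>a<n. (a,a) \<in> R"
    "\<forall>a<n. \<forall>b<n. \<exists>j. is_lub n R a b j" "a < n" "b < n"
  shows "\<exists>mm. is_glb n R a b mm"
proof -
  let ?S = "{s. s < n \<and> (s,a)\<in>R \<and> (s,b)\<in>R}"
  have "finite ?S" by auto
  moreover have "?S \<noteq> {}" using assms by auto
  moreover have "?S \<subseteq> {..<n}" by auto
  ultimately obtain j where j: "j<n" "\<forall>s\<in>?S. (s,j)\<in>R" "\<forall>u<n. (\<forall>s\<in>?S. (s,u)\<in>R) \<longrightarrow> (j,u)\<in>R"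
    using lub_set_ex[of ?S n R] assms by blast
  have "(j,a) \<in> R" using j(3) assms(6) by auto
  moreover have "(j,b) \<in> R" using j(3) assms(7) by auto
  ultimately have "is_glb n R a b j" unfolding is_glb_def using j by auto
  then show ?thesis by blast
qed

locale fam =
  fixes m L t :: nat
  assumes m2: "2 \<le> m" and L1: "1 \<le> L" and t1: "1 \<le> t"
begin

definition NN :: nat where "NN = 1 + L*m + t"
definition lev :: "nat \<Rightarrow> nat" where
  "lev x = (if x = 0 then 0 else if x \<le> L*m then (x-1) div m + 1 else x - L*m + L)"
definition spn :: "nat \<Rightarrow> bool" where
  "spn x \<longleftrightarrow> x = 0 \<or> L*m < x \<or> (x-1) mod m = 0"
definition sp :: "nat \<Rightarrow> nat" where
  "sp k = (if k = 0 then 0 else if k \<le> L then 1 + (k-1)*m else L*m + (k - L))"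
definition AA :: "nat \<Rightarrow> nat set" where
  "AA k = (if k = 1 then {1..<1+m} else {2+(k-1)*m..<1+k*m})"
definition DD :: "nat set" where
  "DD = (\<Union>k\<in>{2..L}. AA k)"
definition LS :: "nat \<Rightarrow> nat set" where
  "LS k = {x. x < NN \<and> lev x = k}"
definition PP :: "(nat \<Rightarrow> nat) set" where
  "PP = Pi\<^sub>E DD (\<lambda>x. LS (lev x - 1))"
definition Par :: "(nat \<Rightarrow> nat) \<Rightarrow> nat \<Rightarrow> nat" where
  "Par p x = (if x \<in> DD then p x else sp (lev x - 1))"
definition anc :: "(nat \<Rightarrow> nat) \<Rightarrow> nat \<Rightarrow> nat \<Rightarrow> nat" where
  "anc p y j = (Par p ^^ (lev y - j)) y"
definition Rel :: "(nat \<Rightarrow> nat) \<Rightarrow> (nat \<times> nat) set" where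
  "Rel p = {(x,y). x < NN \<and> y < NN \<and> (x = y \<or> (lev x < lev y \<and>
      (anc p y (lev x) = x \<or> spn (anc p y (lev x + 1)))))}"
definition HH :: nat where "HH = L + t"

lemma m0: "0 < m" using m2 by simp

lemma lev_le: "x < NN \<Longrightarrow> lev x \<le> HH"
proof -
  assume x: "x < NN"
  have "(x - 1) div m + 1 \<le> L" if "x \<le> L*m" "x \<noteq> 0"
  proof -
    have "x - 1 < L*m" using that by simp
    then have "(x-1) div m < L" using m0 by (simp add: div_less_iff_less_mult)
    then show ?thesis by simp
  qed
  then show ?thesis using x unfolding lev_def HH_def NN_def by auto
qed

lemma lev0: "lev x = 0 \<longleftrightarrow> x = 0"
  unfolding lev_def using L1 by auto

lemma levH: "x < NN \<Longrightarrow> lev x = HH \<longleftrightarrow> x = NN - 1"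
proof -
  assume x: "x < NN"
  have "(x - 1) div m + 1 < L + t" if "x \<le> L*m" "x \<noteq> 0"
  proof -
    have "x - 1 < L*m" using that by simp
    then have "(x-1) div m < L" using m0 by (simp add: div_less_iff_less_mult)
    then show ?thesis using t1 by simp
  qed
  then show ?thesis using x t1 unfolding lev_def HH_def NN_def by auto
qed

lemma sp_lt: "k \<le> HH \<Longrightarrow> sp k < NN"
proof -
  assume k: "k \<le> HH"
  have "(k - 1) * m + 1 < 1 + L*m + t" if "k \<le> L" "k \<noteq> 0"
  proof -
    have "k - 1 \<le> L" using that by simp
    then have "(k-1)*m \<le> L * m" by (rule mult_le_mono1)
    then show ?thesis using t1 by linarith
  qed
  then show ?thesis using k unfolding sp_def HH_def NN_def by (auto simp: not_le)
qed

lemma lev_sp: "k \<le> HH \<Longrightarrow> lev (sp k) = k"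
proof -
  assume k: "k \<le> HH"
  show ?thesis
  proof (cases "k = 0")
    case True then show ?thesis by (simp add: sp_def lev_def)
  next
    case False
    show ?thesis
    proof (cases "k \<le> L")
      case True
      have "1 + (k-1)*m \<le> L*m"
      proof -
        have "(k-1)*m + m \<le> L*m" using True False
          by (metis Suc_diff_1 add.commute mult_Suc mult_le_mono1 not_gr_zero plus_1_eq_Suc)
        then show ?thesis using m0 by linarith
      qed
      then show ?thesis using True False m0 by (simp add: sp_def lev_def)
    next
      case False
      then have "\<not> L*m + (k - L) \<le> L*m" by simp
      then show ?thesis using False \<open>k \<noteq> 0\<close> by (simp add: sp_def lev_def)
    qed
  qed
qed

lemma spn_sp: "spn (sp k)"
  unfolding spn_def sp_def by auto

lemma sp_spn: "x < NN \<Longrightarrow> spn x \<Longrightarrow> sp (lev x) = x"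
proof -
  assume x: "x < NN" and s: "spn x"
  show ?thesis
  proof (cases "x = 0")
    case True then show ?thesis by (simp add: sp_def lev_def)
  next
    case x0: False
    show ?thesis
    proof (cases "x \<le> L*m")
      case True
      then have md: "(x-1) mod m = 0" using s x0 unfolding spn_def by auto
      have "(x-1) div m + 1 \<le> L"
      proof -
        have "x - 1 < L*m" using True x0 by simp
        then have "(x-1) div m < L" using m0 by (simp add: div_less_iff_less_mult)
        then show ?thesis by simp
      qed
      moreover have "1 + (x-1) div m * m = x"
        using md x0 by (metis add_0 add.commute div_mult_mod_eq le_add_diff_inverse less_one not_less)
      ultimately show ?thesis using True x0 by (simp add: sp_def lev_def)
    next
      case False
      have "x - L*m + L \<noteq> 0" using False by simp
      moreover have "\<not> x - L*m + L \<le> L" using False by simp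
      ultimately show ?thesis using False x0 by (simp add: sp_def lev_def)
    qed
  qed
qed

lemma lev_eq: "1 \<le> k \<Longrightarrow> k \<le> L \<Longrightarrow> x < NN \<Longrightarrow>
    (lev x = k \<longleftrightarrow> 1 + (k-1)*m \<le> x \<and> x < 1 + k*m)"
proof -
  assume k1: "1 \<le> k" and kL: "k \<le> L" and x: "x < NN"
  have km: "k * m \<le> L * m" using kL by simp
  show ?thesis
  proof (cases "x = 0")
    case True then show ?thesis using k1 by (simp add: lev_def)
  next
    case x0: False
    show ?thesis
    proof (cases "x \<le> L*m")
      case False
      then have "lev x = x - L*m + L" using x0 by (simp add: lev_def)
      then have "lev x \<noteq> k" using False kL by linarith
      moreover have "\<not> x < 1 + k*m" using False km by linarith
      ultimately show ?thesis by blast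
    next
      case True
      then have lx: "lev x = (x-1) div m + 1" using x0 by (simp add: lev_def)
      have "(x-1) div m + 1 = k \<longleftrightarrow> (k-1) \<le> (x-1) div m \<and> (x-1) div m < k" using k1 by linarith
      also have "\<dots> \<longleftrightarrow> (k-1)*m \<le> x - 1 \<and> x - 1 < k*m"
        using less_eq_div_iff_mult_less_eq[OF m0, of "k-1" "x-1"] div_less_iff_less_mult[OF m0, of "x-1" k]
        by argo
      also have "\<dots> \<longleftrightarrow> 1 + (k-1)*m \<le> x \<and> x < 1 + k*m" using x0 by linarith
      finally show ?thesis using lx by simp
    qed
  qed
qed

lemma sp_small: "1 \<le> k \<Longrightarrow> k \<le> L \<Longrightarrow> sp k = 1 + (k-1)*m"
  unfolding sp_def by simp

lemma HH_ge: "L < HH" using t1 unfolding HH_def by simp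

lemma AA_char: "1 \<le> k \<Longrightarrow> k \<le> L \<Longrightarrow>
    (x \<in> AA k \<longleftrightarrow> x < NN \<and> lev x = k \<and> (k = 1 \<or> x \<noteq> sp k))"
proof -
  assume k1: "1 \<le> k" and kL: "k \<le> L"
  have km: "k * m \<le> L * m" using kL by simp
  have "x \<in> AA k \<Longrightarrow> x < 1 + k*m"
    unfolding AA_def by (auto split: if_splits)
  then have "x \<in> AA k \<Longrightarrow> x < NN"
    using km t1 unfolding NN_def by linarith
  moreover have "x < NN \<Longrightarrow> (x \<in> AA k \<longleftrightarrow> lev x = k \<and> (k = 1 \<or> x \<noteq> sp k))"
    using lev_eq[OF k1 kL] sp_small[OF k1 kL] k1 unfolding AA_def by auto
  ultimately show ?thesis by blast
qed

lemma AA_fin: "finite (AA k)"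
  unfolding AA_def by auto

lemma card_AA: "1 \<le> k \<Longrightarrow> card (AA k) = (if k = 1 then m else m - 1)"
proof -
  assume k1: "1 \<le> k"
  have km2: "k * m = (k-1)*m + m" using k1 by (cases k) auto
  show ?thesis
  proof (cases "k = 1")
    case True then show ?thesis unfolding AA_def by simp
  next
    case False
    then have "AA k = {2+(k-1)*m..<1+((k-1)*m + m)}" unfolding AA_def using km2 by simp
    then show ?thesis using False by simp
  qed
qed

lemma spn_iff_sp: "x < NN \<Longrightarrow> lev x = k \<Longrightarrow> (spn x \<longleftrightarrow> x = sp k)"
  by (metis sp_spn spn_sp)

lemma DD_lt: "x \<in> DD \<Longrightarrow> x < NN"
  unfolding DD_def using AA_char by auto

lemma DD_lev: "x \<in> DD \<Longrightarrow> 2 \<le> lev x \<and> lev x \<le> L"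
  unfolding DD_def using AA_char by fastforce

lemma DD_not_spn: "x \<in> DD \<Longrightarrow> \<not> spn x"
proof -
  assume x: "x \<in> DD"
  then obtain k where k: "k \<in> {2..L}" "x \<in> AA k" unfolding DD_def by auto
  then have "x < NN" "lev x = k" "x \<noteq> sp k" using AA_char[of k x] by auto
  then show ?thesis using spn_iff_sp by simp
qed

lemma NN1_spn: "spn (NN - 1)" and lev_NN1: "lev (NN - 1) = HH"
  using t1 by (auto simp: spn_def NN_def lev_def HH_def)

lemma sp_HH: "sp HH = NN - 1"
  using sp_spn[of "NN - 1"] NN1_spn lev_NN1 by (simp add: NN_def)

end

locale fam_p = fam +
  fixes p :: "nat \<Rightarrow> nat"
  assumes pP: "p \<in> PP"
begin

abbreviation "R \<equiv> Rel p"

lemma Par_lt_lev: "x < NN \<Longrightarrow> Par p x < NN \<and> lev (Par p x) = lev x - 1"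
proof -
  assume x: "x < NN"
  show ?thesis
  proof (cases "x \<in> DD")
    case True
    then have "p x \<in> LS (lev x - 1)" using pP unfolding PP_def by auto
    then show ?thesis using True unfolding Par_def LS_def by auto
  next
    case False
    have "lev x - 1 \<le> HH" using lev_le[OF x] by simp
    then show ?thesis using False sp_lt lev_sp unfolding Par_def by auto
  qed
qed

lemma spn_Par: "x < NN \<Longrightarrow> spn x \<Longrightarrow> spn (Par p x)"
  using DD_not_spn spn_sp unfolding Par_def by auto

lemma fp_lt_lev: "y < NN \<Longrightarrow> (Par p ^^ k) y < NN \<and> lev ((Par p ^^ k) y) = lev y - k"
  by (induction k) (auto simp: Par_lt_lev)

lemma spn_fp: "y < NN \<Longrightarrow> spn y \<Longrightarrow> spn ((Par p ^^ k) y)"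
  by (induction k) (auto simp: spn_Par fp_lt_lev)

lemma anc_lt: "y < NN \<Longrightarrow> anc p y j < NN"
  unfolding anc_def using fp_lt_lev by auto

lemma anc_lev: "y < NN \<Longrightarrow> j \<le> lev y \<Longrightarrow> lev (anc p y j) = j"
  unfolding anc_def using fp_lt_lev by auto

lemma anc_self: "anc p y (lev y) = y"
  unfolding anc_def by simp

lemma anc_anc: "y < NN \<Longrightarrow> i \<le> j \<Longrightarrow> j \<le> lev y \<Longrightarrow> anc p (anc p y j) i = anc p y i"
proof -
  assume y: "y < NN" and ij: "i \<le> j" and j: "j \<le> lev y"
  have l: "lev (anc p y j) = j" using anc_lev y j by simp
  have "anc p (anc p y j) i = (Par p ^^ (lev (anc p y j) - i)) (anc p y j)"
    by (rule anc_def)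
  also have "\<dots> = (Par p ^^ (j - i)) ((Par p ^^ (lev y - j)) y)"
    using l by (simp add: anc_def)
  also have "\<dots> = (Par p ^^ ((j - i) + (lev y - j))) y" by (simp add: funpow_add)
  also have "(j - i) + (lev y - j) = lev y - i" using ij j by simp
  finally show ?thesis unfolding anc_def .
qed

lemma anc_spn_down: "y < NN \<Longrightarrow> i \<le> j \<Longrightarrow> j \<le> lev y \<Longrightarrow> spn (anc p y j) \<Longrightarrow> spn (anc p y i)"
proof -
  assume y: "y < NN" and ij: "i \<le> j" and j: "j \<le> lev y" and s: "spn (anc p y j)"
  have "anc p y i = anc p (anc p y j) i" using anc_anc y ij j by simp
  also have "\<dots> = (Par p ^^ (lev (anc p y j) - i)) (anc p y j)" by (rule anc_def)
  also have "\<dots> = (Par p ^^ (j - i)) (anc p y j)" using anc_lev[OF y j] by simp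
  finally show ?thesis using spn_fp[OF anc_lt[OF y] s] by simp
qed

lemma anc_zero: "y < NN \<Longrightarrow> anc p y 0 = 0"
  using anc_lev[of y 0] lev0 by simp

lemma anc_Par: "y < NN \<Longrightarrow> 1 \<le> lev y \<Longrightarrow> anc p y (lev y - 1) = Par p y"
  unfolding anc_def by (simp add: numeral_2_eq_2)

lemma R_iff: "(x, y) \<in> R \<longleftrightarrow> x < NN \<and> y < NN \<and> (x = y \<or> (lev x < lev y \<and>
      (anc p y (lev x) = x \<or> spn (anc p y (lev x + 1)))))"
  unfolding Rel_def by simp

lemma R_sub: "R \<subseteq> {..<NN} \<times> {..<NN}"
  unfolding Rel_def by auto

lemma R_lev: "(x, y) \<in> R \<Longrightarrow> x \<noteq> y \<Longrightarrow> lev x < lev y"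
  unfolding R_iff by auto

lemma R_refl: "x < NN \<Longrightarrow> (x, x) \<in> R"
  unfolding R_iff by auto

lemma R_antisym: "(x, y) \<in> R \<Longrightarrow> (y, x) \<in> R \<Longrightarrow> x = y"
  by (metis R_lev less_asym)

lemma R_trans: "(x, y) \<in> R \<Longrightarrow> (y, z) \<in> R \<Longrightarrow> (x, z) \<in> R"
proof -
  assume xy: "(x, y) \<in> R" and yz: "(y, z) \<in> R"
  show ?thesis
  proof (cases "x = y \<or> y = z")
    case True then show ?thesis using xy yz by auto
  next
    case False
    then have lxy: "lev x < lev y" and lyz: "lev y < lev z" using R_lev xy yz by auto
    have z: "z < NN" and y: "y < NN" using yz unfolding R_iff by auto
    have A: "anc p y (lev x) = x \<or> spn (anc p y (lev x + 1))" using xy False unfolding R_iff by auto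
    have B: "anc p z (lev y) = y \<or> spn (anc p z (lev y + 1))" using yz False unfolding R_iff by auto
    have "anc p z (lev x) = x \<or> spn (anc p z (lev x + 1))"
    proof (cases "anc p z (lev y) = y")
      case True
      have e1: "anc p z (lev x) = anc p y (lev x)"
        using anc_anc[OF z, of "lev x" "lev y"] True lxy lyz by simp
      have e2: "anc p z (lev x + 1) = anc p y (lev x + 1)"
        using anc_anc[OF z, of "lev x + 1" "lev y"] True lxy lyz by simp
      show ?thesis using A e1 e2 by simp
    next
      case False
      then have "spn (anc p z (lev y + 1))" using B by simp
      then have "spn (anc p z (lev x + 1))"
        using anc_spn_down[OF z, of "lev x + 1" "lev y + 1"] lxy lyz by simp
      then show ?thesis by simp
    qed
    then show ?thesis using xy z lxy lyz unfolding R_iff by auto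
  qed
qed

lemma R_sp: "u < NN \<Longrightarrow> k \<le> lev u \<Longrightarrow> spn (anc p u k) \<Longrightarrow> (sp k, u) \<in> R"
proof -
  assume u: "u < NN" and k: "k \<le> lev u" and s: "spn (anc p u k)"
  have e: "sp k = anc p u k" using sp_spn[OF anc_lt[OF u] s] anc_lev[OF u k] by simp
  have kH: "k \<le> HH" using k lev_le[OF u] by simp
  show ?thesis
  proof (cases "k = lev u")
    case True then show ?thesis using e anc_self R_refl u by simp
  next
    case False
    have a1: "sp k < NN" "lev (sp k) = k" using sp_lt lev_sp kH by auto
    have "k < lev u" using False k by simp
    then show ?thesis using e[symmetric] a1 u unfolding R_iff by auto
  qed
qed

lemma R_below_sp: "x < NN \<Longrightarrow> lev x < k \<Longrightarrow> k \<le> HH \<Longrightarrow> (x, sp k) \<in> R"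
proof -
  assume x: "x < NN" and lk: "lev x < k" and kH: "k \<le> HH"
  have s: "sp k < NN" and l: "lev (sp k) = k" using sp_lt lev_sp kH by auto
  have "spn (anc p (sp k) (lev x + 1))"
    unfolding anc_def using spn_fp[OF s spn_sp] by simp
  then show ?thesis using x s l lk unfolding R_iff by auto
qed

lemma R_top: "x < NN \<Longrightarrow> (x, NN - 1) \<in> R"
proof (cases "x = NN - 1")
  case True
  assume "x < NN" then show ?thesis using True R_refl by simp
next
  case False
  assume x: "x < NN"
  then have "lev x < HH" using lev_le levH False by fastforce
  then show ?thesis using R_below_sp[OF x, of HH] sp_HH by simp
qed

lemma R_bot: "y < NN \<Longrightarrow> (0, y) \<in> R"
proof (cases "y = 0")
  case True
  assume "y < NN" then show ?thesis using True R_refl by simp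
next
  case False
  assume y: "y < NN"
  have l0: "lev 0 = 0" by (simp add: lev_def)
  have "0 < lev y" using lev0[of y] False by simp
  then show ?thesis using l0 anc_zero[OF y] y unfolding R_iff by (auto simp: NN_def)
qed

lemma R_bot_only: "(x, 0) \<in> R \<Longrightarrow> x = 0"
  by (metis R_lev lev0 not_less0)

lemma Par_R: "x < NN \<Longrightarrow> x \<noteq> 0 \<Longrightarrow> (Par p x, x) \<in> R"
proof -
  assume x: "x < NN" and x0: "x \<noteq> 0"
  have l: "1 \<le> lev x" using lev0[of x] x0 by simp
  show ?thesis using Par_lt_lev[OF x] anc_Par[OF x l] x l unfolding R_iff by auto
qed

lemma R_Par: "(z, a) \<in> R \<Longrightarrow> lev z + 1 < lev a \<Longrightarrow> (z, Par p a) \<in> R"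
proof -
  assume za: "(z, a) \<in> R" and lz: "lev z + 1 < lev a"
  have a: "a < NN" and z: "z < NN" using za unfolding R_iff by auto
  have l: "1 \<le> lev a" using lz by simp
  have pa: "Par p a = anc p a (lev a - 1)" using anc_Par[OF a l] by simp
  have lp: "lev (Par p a) = lev a - 1" using Par_lt_lev[OF a] by simp
  have "z \<noteq> a" using lz by auto
  then have A: "anc p a (lev z) = z \<or> spn (anc p a (lev z + 1))" using za unfolding R_iff by auto
  have e1: "anc p (Par p a) (lev z) = anc p a (lev z)"
    using pa anc_anc[OF a, of "lev z" "lev a - 1"] lz by simp
  have e2: "anc p (Par p a) (lev z + 1) = anc p a (lev z + 1)"
    using pa anc_anc[OF a, of "lev z + 1" "lev a - 1"] lz by simp
  show ?thesis using A e1 e2 lp lz z Par_lt_lev[OF a] unfolding R_iff by auto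
qed

lemma incomp_lt_HH: "x < NN \<Longrightarrow> y < NN \<Longrightarrow> (y, x) \<notin> R \<Longrightarrow> lev x < HH"
proof -
  assume x: "x < NN" and y: "y < NN" and n: "(y, x) \<notin> R"
  have "x \<noteq> NN - 1" using R_top[OF y] n by auto
  then show ?thesis using lev_le[OF x] levH[OF x] by fastforce
qed

lemma join_incomp:
  assumes x: "x < NN" and y: "y < NN" and nxy: "(x, y) \<notin> R" and nyx: "(y, x) \<notin> R"
    and lyx: "lev y \<le> lev x"
  shows "is_lub NN R x y (sp (lev x + 1))"
proof -
  have lH: "lev x < HH" using incomp_lt_HH x y nyx by simp
  have j: "sp (lev x + 1) < NN" using sp_lt lH by simp
  have jx: "(x, sp (lev x + 1)) \<in> R" using R_below_sp[OF x, of "lev x + 1"] lH by simp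
  have jy: "(y, sp (lev x + 1)) \<in> R" using R_below_sp[OF y, of "lev x + 1"] lH lyx by simp
  have least: "(sp (lev x + 1), u) \<in> R" if u: "u < NN" and xu: "(x,u) \<in> R" and yu: "(y,u) \<in> R" for u
  proof -
    have xneu: "x \<noteq> u" using yu nyx by auto
    have yneu: "y \<noteq> u" using xu nxy by auto
    have lxu: "lev x < lev u" using R_lev xu xneu by simp
    have lyu: "lev y < lev u" using R_lev yu yneu by simp
    have A: "anc p u (lev x) = x \<or> spn (anc p u (lev x + 1))" using xu xneu unfolding R_iff by auto
    have B: "anc p u (lev y) = y \<or> spn (anc p u (lev y + 1))" using yu yneu unfolding R_iff by auto
    have "spn (anc p u (lev x + 1))"
    proof (cases "anc p u (lev x) = x")
      case False then show ?thesis using A by simp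
    next
      case True
      show ?thesis
      proof (cases "anc p u (lev y) = y")
        case True2: True
        have "anc p x (lev y) = y"
          using anc_anc[OF u, of "lev y" "lev x"] True True2 lyx lxu by simp
        then show ?thesis
        proof (cases "lev y = lev x")
          case True3: True
          then have "y = x" using \<open>anc p x (lev y) = y\<close> anc_self by simp
          then show ?thesis using nxy R_refl x by simp
        next
          case False
          then have "(y, x) \<in> R" using \<open>anc p x (lev y) = y\<close> lyx x y unfolding R_iff by auto
          then show ?thesis using nyx by simp
        qed
      next
        case False
        then have sy: "spn (anc p u (lev y + 1))" using B by simp
        show ?thesis
        proof (cases "lev y = lev x")
          case True then show ?thesis using sy by simp
        next
          case False
          have "anc p x (lev y + 1) = anc p u (lev y + 1)"
            using anc_anc[OF u, of "lev y + 1" "lev x"] \<open>anc p u (lev x) = x\<close> lyx False lxu by simp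
          then have "(y, x) \<in> R" using sy lyx False x y unfolding R_iff by auto
          then show ?thesis using nyx by simp
        qed
      qed
    qed
    then show ?thesis using R_sp[OF u, of "lev x + 1"] lxu by simp
  qed
  show ?thesis unfolding is_lub_def using j jx jy least by auto
qed

lemma is_lub_sym: "is_lub n Q a b j \<longleftrightarrow> is_lub n Q b a j"
  unfolding is_lub_def by auto

lemma lub_ex: "x < NN \<Longrightarrow> y < NN \<Longrightarrow> \<exists>j. is_lub NN R x y j"
proof -
  assume x: "x < NN" and y: "y < NN"
  show ?thesis
  proof (cases "(x, y) \<in> R")
    case True
    then have "is_lub NN R x y y" unfolding is_lub_def using y R_refl by auto
    then show ?thesis by blast
  next
    case F1: False
    show ?thesis
    proof (cases "(y, x) \<in> R")
      case True
      then have "is_lub NN R x y x" unfolding is_lub_def using x R_refl by auto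
      then show ?thesis by blast
    next
      case False
      show ?thesis
      proof (cases "lev y \<le> lev x")
        case True then show ?thesis using join_incomp x y F1 False by blast
      next
        case False2: False
        then have "is_lub NN R y x (sp (lev y + 1))" using join_incomp x y F1 False by simp
        then show ?thesis using is_lub_sym by blast
      qed
    qed
  qed
qed

lemma lattice: "lattice_order NN R"
proof -
  have r: "refl_on {..<NN} R" unfolding refl_on_def using R_refl by simp
  have t: "trans R" unfolding trans_def using R_trans by blast
  have a: "antisym R" unfolding antisym_def using R_antisym by blast
  have po: "partial_order_on {..<NN} R"
    unfolding partial_order_on_def preorder_on_def using r t a R_sub by simp
  have lubs: "\<forall>a<NN. \<forall>b<NN. \<exists>j. is_lub NN R a b j" using lub_ex by blast
  have "trans R" unfolding trans_def using R_trans by blast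
  then have glbs: "\<forall>a<NN. \<forall>b<NN. \<exists>mm. is_glb NN R a b mm"
    using glb_ex[of 0 NN R] lubs R_bot R_refl by (auto simp: NN_def)
  show ?thesis unfolding lattice_order_def using po lubs glbs R_sub by (auto simp: NN_def)
qed

lemma lub_unique: "is_lub NN R a b j \<Longrightarrow> is_lub NN R a b j' \<Longrightarrow> j = j'"
proof -
  assume A: "is_lub NN R a b j" and B: "is_lub NN R a b j'"
  have "(j, j') \<in> R" using A B unfolding is_lub_def by simp
  moreover have "(j', j) \<in> R" using A B unfolding is_lub_def by simp
  ultimately show ?thesis using R_antisym by simp
qed

lemma covers_lev: "covers NN R x y \<Longrightarrow> lev y = lev x + 1"
proof -
  assume c: "covers NN R x y"
  have x: "x < NN" and y: "y < NN" and xy: "(x,y) \<in> R" and ne: "x \<noteq> y"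
    using c unfolding covers_def by simp_all
  have nz: "False" if "z < NN" "(x, z) \<in> R" "(z, y) \<in> R" "z \<noteq> x" "z \<noteq> y" for z
    using c that unfolding covers_def by blast
  have l: "lev x < lev y" using R_lev xy ne by simp
  show ?thesis
  proof (rule ccontr)
    assume "lev y \<noteq> lev x + 1"
    then have l2: "lev x + 1 < lev y" using l by simp
    have y0: "y \<noteq> 0" using l lev0[of y] by auto
    have a1: "Par p y < NN" "lev (Par p y) = lev y - 1" using Par_lt_lev[OF y] by auto
    have a2: "(x, Par p y) \<in> R" using R_Par xy l2 by simp
    have a3: "(Par p y, y) \<in> R" using Par_R y y0 by simp
    have a4: "Par p y \<noteq> x" "Par p y \<noteq> y" using a1(2) l2 by auto
    show False using nz[OF a1(1) a2 a3 a4] .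
  qed
qed

lemma semimod: "semimodular_lattice NN R"
  unfolding semimodular_lattice_def
proof (intro conjI lattice allI impI)
  fix a b mm j
  assume a: "a < NN" and b: "b < NN" and g: "is_glb NN R a b mm" and lj: "is_lub NN R a b j"
    and c: "covers NN R mm a"
  have ma: "(mm, a) \<in> R" and mb: "(mm, b) \<in> R" and mlt: "mm < NN"
    and gl: "\<forall>u<NN. (u, a) \<in> R \<and> (u, b) \<in> R \<longrightarrow> (u, mm) \<in> R"
    using g unfolding is_glb_def by auto
  show "covers NN R b j"
  proof (cases "(a, b) \<in> R")
    case True
    then have "(a, mm) \<in> R" using gl a R_refl by auto
    then have "a = mm" using ma R_antisym by simp
    then show ?thesis using c unfolding covers_def by simp
  next
    case F1: False
    show ?thesis
    proof (cases "(b, a) \<in> R")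
      case True
      then have "(b, mm) \<in> R" using gl b R_refl by auto
      then have "b = mm" using mb R_antisym by simp
      have "is_lub NN R a b a" unfolding is_lub_def using a True R_refl by auto
      then have "j = a" using lub_unique lj by blast
      then show ?thesis using c \<open>b = mm\<close> by simp
    next
      case False
      have la: "lev a = lev mm + 1" using covers_lev c by simp
      have "mm \<noteq> b" using ma False by auto
      then have "lev mm < lev b" using R_lev mb by simp
      then have lab: "lev a \<le> lev b" using la by simp
      have "is_lub NN R b a (sp (lev b + 1))" using join_incomp b a F1 False lab by simp
      then have jj: "j = sp (lev b + 1)" using lub_unique lj is_lub_sym by blast
      have lH: "lev b < HH" using incomp_lt_HH b a F1 by simp
      have jl: "lev j = lev b + 1" "j < NN" using jj lev_sp sp_lt lH by auto
      have bj: "(b, j) \<in> R" using R_below_sp[OF b, of "lev b + 1"] jj lH by simp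
      show ?thesis unfolding covers_def
      proof (intro conjI b jl(2) bj)
        show "b \<noteq> j" using jl by auto
        show "\<not> (\<exists>z<NN. (b, z) \<in> R \<and> (z, j) \<in> R \<and> z \<noteq> b \<and> z \<noteq> j)"
        proof
          assume "\<exists>z<NN. (b, z) \<in> R \<and> (z, j) \<in> R \<and> z \<noteq> b \<and> z \<noteq> j"
          then obtain z where "(b, z) \<in> R" "(z, j) \<in> R" "z \<noteq> b" "z \<noteq> j" by blast
          then have "lev b < lev z" "lev z < lev j" using R_lev by auto
          then show False using jl by simp
        qed
      qed
    qed
  qed
qed

lemma Par_covers: "x < NN \<Longrightarrow> x \<noteq> 0 \<Longrightarrow> covers NN R (Par p x) x"
proof -
  assume x: "x < NN" and x0: "x \<noteq> 0"
  have l: "lev (Par p x) = lev x - 1" "Par p x < NN" using Par_lt_lev[OF x] by auto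
  have lx: "0 < lev x" using lev0[of x] x0 by simp
  show ?thesis unfolding covers_def
  proof (intro conjI l(2) x Par_R[OF x x0])
    show "Par p x \<noteq> x" using l lx by auto
    show "\<not> (\<exists>z<NN. (Par p x, z) \<in> R \<and> (z, x) \<in> R \<and> z \<noteq> Par p x \<and> z \<noteq> x)"
    proof
      assume "\<exists>z<NN. (Par p x, z) \<in> R \<and> (z, x) \<in> R \<and> z \<noteq> Par p x \<and> z \<noteq> x"
      then obtain z where "(Par p x, z) \<in> R" "(z, x) \<in> R" "z \<noteq> Par p x" "z \<noteq> x" by blast
      then have "lev (Par p x) < lev z" "lev z < lev x" using R_lev by auto
      then show False using l lx by simp
    qed
  qed
qed

lemma par_unique: "y < NN \<Longrightarrow> \<not> spn y \<Longrightarrow> (z, y) \<in> R \<Longrightarrow> lev z + 1 = lev y \<Longrightarrow> z = Par p y"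
proof -
  assume y: "y < NN" and ns: "\<not> spn y" and zy: "(z, y) \<in> R" and l: "lev z + 1 = lev y"
  have "z \<noteq> y" using l by auto
  then have "anc p y (lev z) = z \<or> spn (anc p y (lev z + 1))" using zy unfolding R_iff by auto
  then have "anc p y (lev z) = z" using ns l anc_self by simp
  moreover have "anc p y (lev z) = Par p y" using anc_Par[OF y] l by (metis add_diff_cancel_right' le_add2)
  ultimately show ?thesis by simp
qed

end

lemma covers_iso:
  assumes f: "bij_betw f {..<n} {..<n}" and iso: "\<forall>x<n. \<forall>y<n. (x,y) \<in> R1 \<longleftrightarrow> (f x, f y) \<in> R2"
    and c: "covers n R1 a b"
  shows "covers n R2 (f a) (f b)"
proof -
  have a: "a < n" and b: "b < n" and ab: "(a,b) \<in> R1" and ne: "a \<noteq> b"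
    using c unfolding covers_def by auto
  have nz: "False" if "z < n" "(a, z) \<in> R1" "(z, b) \<in> R1" "z \<noteq> a" "z \<noteq> b" for z
    using c that unfolding covers_def by blast
  have fa: "f a < n" and fb: "f b < n" using f a b unfolding bij_betw_def by auto
  have fab: "(f a, f b) \<in> R2" using iso a b ab by simp
  have fne: "f a \<noteq> f b" using f a b ne unfolding bij_betw_def inj_on_def by auto
  show ?thesis unfolding covers_def
  proof (intro conjI fa fb fab fne notI)
    assume "\<exists>z<n. (f a, z) \<in> R2 \<and> (z, f b) \<in> R2 \<and> z \<noteq> f a \<and> z \<noteq> f b"
    then obtain z where z: "z < n" "(f a, z) \<in> R2" "(z, f b) \<in> R2" "z \<noteq> f a" "z \<noteq> f b" by blast
    then obtain w where w: "w < n" "z = f w" using f unfolding bij_betw_def by (metis imageE lessThan_iff)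
    have "(a, w) \<in> R1" using iso a w z by simp
    moreover have "(w, b) \<in> R1" using iso b w z by simp
    moreover have "w \<noteq> a" "w \<noteq> b" using w z by auto
    ultimately show False using nz w(1) by blast
  qed
qed

context fam
begin

lemma fam_p_intro: "q \<in> PP \<Longrightarrow> fam_p m L t q"
  unfolding fam_p_def fam_p_axioms_def using fam_axioms by simp

lemma Rel_inj: "p \<in> PP \<Longrightarrow> q \<in> PP \<Longrightarrow> Rel p = Rel q \<Longrightarrow> p = q"
proof -
  assume pP: "p \<in> PP" and qP: "q \<in> PP" and e: "Rel p = Rel q"
  interpret P: fam_p m L t p using fam_p_intro pP by simp
  interpret Q: fam_p m L t q using fam_p_intro qP by simp
  show ?thesis
  proof (rule PiE_ext[OF pP[unfolded PP_def] qP[unfolded PP_def]])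
    fix x assume x: "x \<in> DD"
    have xl: "x < NN" using DD_lt x by simp
    have lx: "2 \<le> lev x" using DD_lev x by simp
    have ns: "\<not> spn x" using DD_not_spn x by simp
    have pp: "Par p x = p x" "Par q x = q x" using x unfolding Par_def by auto
    have x0: "x \<noteq> 0" using lx lev0[of x] by auto
    have "(Par p x, x) \<in> Rel q" using P.Par_R[OF xl x0] e by simp
    moreover have "lev (Par p x) + 1 = lev x" using P.Par_lt_lev[OF xl] lx by simp
    ultimately have "Par p x = Par q x" using Q.par_unique[OF xl ns] by simp
    then show "p x = q x" using pp by simp
  qed
qed

definition isoP :: "(nat \<Rightarrow> nat) \<Rightarrow> (nat \<Rightarrow> nat) \<Rightarrow> (nat \<Rightarrow> nat) \<Rightarrow> bool" where
  "isoP p q f \<longleftrightarrow> bij_betw f {..<NN} {..<NN} \<and>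
     (\<forall>x<NN. \<forall>y<NN. (x,y) \<in> Rel p \<longleftrightarrow> (f x, f y) \<in> Rel q)"

lemma iso_lev:
  assumes pP: "p \<in> PP" and qP: "q \<in> PP" and iso: "isoP p q f"
  shows "x < NN \<Longrightarrow> lev (f x) = lev x"
proof -
  interpret P: fam_p m L t p using fam_p_intro pP by simp
  interpret Q: fam_p m L t q using fam_p_intro qP by simp
  have f: "bij_betw f {..<NN} {..<NN}" and fi: "\<forall>x<NN. \<forall>y<NN. (x,y) \<in> Rel p \<longleftrightarrow> (f x, f y) \<in> Rel q"
    using iso unfolding isoP_def by auto
  have fl: "x < NN \<Longrightarrow> f x < NN" for x using f unfolding bij_betw_def by auto
  have "\<forall>x<NN. lev x = k \<longrightarrow> lev (f x) = k" for k
  proof (induction k)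
    case 0
    show ?case
    proof (intro allI impI)
      fix x assume x: "x < NN" and l: "lev x = 0"
      then have x0: "x = 0" using lev0 by simp
      obtain w where w: "w < NN" "f w = 0"
        using f unfolding bij_betw_def by (metis NN_def imageE lessThan_iff zero_less_Suc add_Suc plus_1_eq_Suc)
      have "(0, w) \<in> Rel p" using P.R_bot w by simp
      then have "(f 0, 0) \<in> Rel q" using fi w x x0 by (metis NN_def add_gr_0 less_numeral_extra(1))
      then have "f 0 = 0" using Q.R_bot_only by simp
      then show "lev (f x) = 0" using x0 by (simp add: lev_def)
    qed
  next
    case (Suc k)
    show ?case
    proof (intro allI impI)
      fix x assume x: "x < NN" and l: "lev x = Suc k"
      then have x0: "x \<noteq> 0" using lev0[of x] by auto
      have c: "covers NN (Rel p) (Par p x) x" using P.Par_covers x x0 by simp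
      have "covers NN (Rel q) (f (Par p x)) (f x)" using covers_iso[OF f fi c] .
      then have "lev (f x) = lev (f (Par p x)) + 1" using Q.covers_lev by simp
      moreover have "lev (f (Par p x)) = k" using Suc P.Par_lt_lev[OF x] l by simp
      ultimately show "lev (f x) = Suc k" by simp
    qed
  qed
  then show "x < NN \<Longrightarrow> lev (f x) = lev x" by blast
qed

lemma iso_sp:
  assumes pP: "p \<in> PP" and qP: "q \<in> PP" and iso: "isoP p q f" and k2: "2 \<le> k" and kL: "k \<le> L"
  shows "f (sp k) = sp k"
proof -
  interpret P: fam_p m L t p using fam_p_intro pP by simp
  interpret Q: fam_p m L t q using fam_p_intro qP by simp
  have f: "bij_betw f {..<NN} {..<NN}" and fi: "\<forall>x<NN. \<forall>y<NN. (x,y) \<in> Rel p \<longleftrightarrow> (f x, f y) \<in> Rel q"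
    using iso unfolding isoP_def by auto
  have kH: "k \<le> HH" using kL HH_ge by simp
  have s: "sp k < NN" "lev (sp k) = k" using sp_lt lev_sp kH by auto
  let ?y = "f (sp k)"
  have y: "?y < NN" using f s unfolding bij_betw_def by auto
  have ly: "lev ?y = k" using iso_lev[OF pP qP iso s(1)] s by simp
  have below: "(z, ?y) \<in> Rel q" if z: "z < NN" "lev z = k - 1" for z
  proof -
    obtain w where w: "w < NN" "f w = z" using f z unfolding bij_betw_def by (metis imageE lessThan_iff)
    have "lev w = k - 1" using iso_lev[OF pP qP iso w(1)] w z by simp
    then have "(w, sp k) \<in> Rel p" using P.R_below_sp[OF w(1), of k] kH k2 by simp
    then show ?thesis using fi w s by simp
  qed
  have "spn ?y"
  proof (rule ccontr)
    assume ns: "\<not> spn ?y"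
    have k1: "1 \<le> k - 1" "k - 1 \<le> L" using k2 kL by auto
    have z1: "sp (k-1) < NN" "lev (sp (k-1)) = k - 1" using sp_lt lev_sp kH by auto
    have e0: "k - 1 = Suc (k - 2)" using k2 by simp
    have e: "(k-1)*m = (k-2)*m + m" by (subst e0) simp
    have z2: "sp (k-1) + 1 \<in> AA (k-1)"
      using sp_small[OF k1] k2 m2 e unfolding AA_def by (auto simp: numeral_2_eq_2)
    then have z2': "sp (k-1) + 1 < NN" "lev (sp (k-1) + 1) = k - 1" using AA_char[OF k1] by auto
    have "sp (k-1) = Par q ?y" using Q.par_unique[OF y ns below[OF z1]] z1 ly k2 by simp
    moreover have "sp (k-1) + 1 = Par q ?y" using Q.par_unique[OF y ns below[OF z2']] z2' ly k2 by simp
    ultimately show False by simp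
  qed
  then show ?thesis using sp_spn[OF y] ly by simp
qed

definition GG :: "(nat \<Rightarrow> nat) set" where
  "GG = {f \<in> {..<NN} \<rightarrow>\<^sub>E {..<NN}. bij_betw f {..<NN} {..<NN} \<and> (\<forall>x<NN. lev (f x) = lev x)
      \<and> (\<forall>k\<in>{2..L}. f (sp k) = sp k)}"

lemma lev_small: "x \<noteq> 0 \<Longrightarrow> x \<le> L*m \<Longrightarrow> 1 \<le> lev x \<and> lev x \<le> L"
proof -
  assume x0: "x \<noteq> 0" and x: "x \<le> L*m"
  have "x - 1 < L*m" using x0 x by simp
  then have "(x-1) div m < L" using m0 by (simp add: div_less_iff_less_mult)
  then show ?thesis using x0 x by (simp add: lev_def)
qed

lemma lev_big: "L < lev x \<Longrightarrow> L*m < x \<and> lev x = x - L*m + L"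
proof -
  assume l: "L < lev x"
  have "x \<noteq> 0" using l by (metis lev0 not_less0)
  moreover have "\<not> x \<le> L*m"
  proof
    assume "x \<le> L*m"
    then have "lev x \<le> L" using lev_small calculation by blast
    then show False using l by simp
  qed
  ultimately show ?thesis by (simp add: lev_def)
qed

lemma classify: "x < NN \<Longrightarrow> x = 0 \<or> L*m < x \<or> (\<exists>k\<in>{1..L}. x \<in> AA k) \<or> (\<exists>k\<in>{2..L}. x = sp k)"
proof -
  assume x: "x < NN"
  show ?thesis
  proof (cases "x = 0 \<or> L*m < x")
    case True then show ?thesis by blast
  next
    case False
    then have x0: "x \<noteq> 0" and xl: "x \<le> L*m" by auto
    let ?k = "lev x"
    have k: "1 \<le> ?k" "?k \<le> L" using lev_small[OF x0 xl] by auto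
    show ?thesis
    proof (cases "?k = 1 \<or> x \<noteq> sp ?k")
      case True
      then have "x \<in> AA ?k" using AA_char[OF k] x by simp
      then show ?thesis using k by auto
    next
      case False
      then have "x = sp ?k" "2 \<le> ?k" using k by auto
      then show ?thesis using k by auto
    qed
  qed
qed

lemma GG_lt: "f \<in> GG \<Longrightarrow> x < NN \<Longrightarrow> f x < NN"
  unfolding GG_def by auto

lemma GG_inj: "f \<in> GG \<Longrightarrow> x < NN \<Longrightarrow> y < NN \<Longrightarrow> f x = f y \<Longrightarrow> x = y"
  unfolding GG_def bij_betw_def inj_on_def by auto

lemma GG_fix: "f \<in> GG \<Longrightarrow> x < NN \<Longrightarrow> \<not> (\<exists>k\<in>{1..L}. x \<in> AA k) \<Longrightarrow> f x = x"
proof -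
  assume f: "f \<in> GG" and x: "x < NN" and nA: "\<not> (\<exists>k\<in>{1..L}. x \<in> AA k)"
  have fl: "lev (f x) = lev x" using f x unfolding GG_def by auto
  consider "x = 0" | "L*m < x" | "\<exists>k\<in>{2..L}. x = sp k" using classify[OF x] nA by blast
  then show ?thesis
  proof cases
    case 1
    then have "lev (f x) = 0" using fl by (simp add: lev_def)
    then show ?thesis using 1 lev0 by simp
  next
    case 2
    then have "L < lev x" using L1 by (simp add: lev_def)
    then have a: "lev x = x - L*m + L" and b: "L*m < f x \<and> lev (f x) = f x - L*m + L"
      using lev_big fl by auto
    then have "x - L*m = f x - L*m" using fl by simp
    then show ?thesis using eq_diff_iff[of "L*m" x "f x"] b 2 by simp
  next
    case 3
    then show ?thesis using f unfolding GG_def by auto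
  qed
qed

lemma GG_maps: "f \<in> GG \<Longrightarrow> k \<in> {1..L} \<Longrightarrow> x \<in> AA k \<Longrightarrow> f x \<in> AA k"
proof -
  assume f: "f \<in> GG" and k: "k \<in> {1..L}" and x: "x \<in> AA k"
  have k1: "1 \<le> k" "k \<le> L" using k by auto
  have xc: "x < NN" "lev x = k" "k = 1 \<or> x \<noteq> sp k" using AA_char[OF k1] x by auto
  have "f x < NN" "lev (f x) = k" using f xc unfolding GG_def by auto
  moreover have "k = 1 \<or> f x \<noteq> sp k"
  proof (cases "k = 1")
    case False
    then have "f (sp k) = sp k" "sp k < NN" using f k1 sp_lt HH_ge unfolding GG_def by auto
    then show ?thesis using GG_inj[OF f xc(1)] xc(3) False by metis
  qed simp
  ultimately show ?thesis using AA_char[OF k1] by simp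
qed

definition phi :: "(nat \<Rightarrow> nat) \<Rightarrow> nat \<Rightarrow> nat \<Rightarrow> nat" where
  "phi f = (\<lambda>k\<in>{1..L}. (\<lambda>x. if x \<in> AA k then f x else x))"

lemma phi_in: "f \<in> GG \<Longrightarrow> phi f \<in> Pi\<^sub>E {1..L} (\<lambda>k. {g. g permutes AA k})"
proof -
  assume f: "f \<in> GG"
  have "(\<lambda>x. if x \<in> AA k then f x else x) permutes AA k" if k: "k \<in> {1..L}" for k
  proof (rule bij_imp_permutes)
    let ?g = "\<lambda>x. if x \<in> AA k then f x else x"
    have sub: "AA k \<subseteq> {..<NN}" using AA_char k by auto
    have inj: "inj_on ?g (AA k)" unfolding inj_on_def using GG_inj[OF f] sub by auto
    have im: "?g ` AA k \<subseteq> AA k" using GG_maps[OF f k] by auto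
    have "?g ` AA k = AA k" using endo_inj_surj[OF AA_fin im inj] .
    then show "bij_betw ?g (AA k) (AA k)" using inj unfolding bij_betw_def by simp
  qed simp
  then show ?thesis unfolding phi_def by auto
qed

lemma phi_inj: "inj_on phi GG"
proof (rule inj_onI)
  fix f g assume f: "f \<in> GG" and g: "g \<in> GG" and e: "phi f = phi g"
  show "f = g"
  proof (rule extensionalityI)
    show "f \<in> extensional {..<NN}" "g \<in> extensional {..<NN}" using f g unfolding GG_def by (auto simp: PiE_iff)
    fix x assume "x \<in> {..<NN}"
    then have x: "x < NN" by simp
    show "f x = g x"
    proof (cases "\<exists>k\<in>{1..L}. x \<in> AA k")
      case True
      then obtain k where k: "k \<in> {1..L}" "x \<in> AA k" by blast
      have "phi f k x = phi g k x" using e by simp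
      then show ?thesis using k unfolding phi_def by simp
    next
      case False
      then show ?thesis using GG_fix[OF f x] GG_fix[OF g x] by simp
    qed
  qed
qed

lemma card_GG: "card GG \<le> fact m * fact (m-1) ^ (L-1)"
proof -
  have fin: "finite (Pi\<^sub>E {1..L} (\<lambda>k. {g. g permutes AA k}))"
    by (rule finite_PiE) (auto intro: finite_permutations AA_fin)
  have "card GG \<le> card (Pi\<^sub>E {1..L} (\<lambda>k. {g. g permutes AA k}))"
    using card_inj_on_le[OF phi_inj _ fin] phi_in by auto
  also have "\<dots> = (\<Prod>k\<in>{1..L}. card {g. g permutes AA k})" by (simp add: card_PiE)
  also have "\<dots> = (\<Prod>k\<in>{1..L}. fact (if k = 1 then m else m - 1))"
    by (rule prod.cong) (auto simp: card_permutations AA_fin card_AA simp del: of_nat_fact)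
  also have "{1..L} = insert 1 {2..L}" using L1 by auto
  also have "(\<Prod>k\<in>insert 1 {2..L}. fact (if k = 1 then m else m - 1)) =
      fact m * (\<Prod>k\<in>{2..L}. (fact (m - 1) :: nat))"
    by (subst prod.insert) (auto intro!: prod.cong)
  also have "\<dots> = fact m * fact (m-1) ^ (L-1)" by simp
  finally show ?thesis .
qed

lemma card_LS: "1 \<le> j \<Longrightarrow> j \<le> L \<Longrightarrow> card (LS j) = m"
proof -
  assume j1: "1 \<le> j" and jL: "j \<le> L"
  have "LS j = {1 + (j-1)*m..<1 + j*m}"
  proof -
    have jm: "j*m \<le> L*m" using jL by simp
    have b: "x < 1 + j*m \<Longrightarrow> x < NN" for x using jm t1 unfolding NN_def by linarith
    have mem: "x \<in> LS j \<longleftrightarrow> x \<in> {1 + (j-1)*m..<1 + j*m}" for x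
    proof (cases "x < NN")
      case True then show ?thesis unfolding LS_def using lev_eq[OF j1 jL True] by simp
    next
      case False then show ?thesis unfolding LS_def using b by auto
    qed
    show ?thesis by (rule set_eqI[OF mem])
  qed
  moreover have "j*m = (j-1)*m + m" using j1 by (cases j) auto
  ultimately show ?thesis by simp
qed

lemma card_DD: "card DD = (L-1)*(m-1)"
proof -
  have "card DD = (\<Sum>k\<in>{2..L}. card (AA k))"
    unfolding DD_def
  proof (rule card_UN_disjoint)
    show "\<forall>i\<in>{2..L}. \<forall>j\<in>{2..L}. i \<noteq> j \<longrightarrow> AA i \<inter> AA j = {}"
    proof (intro ballI impI)
      fix i j assume i: "i \<in> {2..L}" and j: "j \<in> {2..L}" and ij: "i \<noteq> j"
      have "x \<in> AA i \<Longrightarrow> lev x = i" for x using AA_char[of i x] i by auto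
      moreover have "x \<in> AA j \<Longrightarrow> lev x = j" for x using AA_char[of j x] j by auto
      ultimately show "AA i \<inter> AA j = {}" using ij by auto
    qed
  qed (auto simp: AA_fin)
  also have "\<dots> = (\<Sum>k\<in>{2..L}. m - 1)" by (rule sum.cong) (auto simp: card_AA)
  also have "\<dots> = (L-1)*(m-1)" by simp
  finally show ?thesis .
qed

lemma card_PP: "card PP = m ^ ((L-1)*(m-1))"
proof -
  have finDD: "finite DD" unfolding DD_def using AA_fin by auto
  have "card PP = (\<Prod>x\<in>DD. card (LS (lev x - 1)))" unfolding PP_def by (simp add: card_PiE finDD)
  also have "\<dots> = (\<Prod>x\<in>DD. m)"
  proof (rule prod.cong)
    fix x assume "x \<in> DD"
    then have "2 \<le> lev x" "lev x \<le> L" using DD_lev by auto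
    then show "card (LS (lev x - 1)) = m" using card_LS by simp
  qed simp
  also have "\<dots> = m ^ card DD" by simp
  finally show ?thesis using card_DD by simp
qed

lemma rel_image: "p \<in> PP \<Longrightarrow> q \<in> PP \<Longrightarrow> isoP p q f \<Longrightarrow> Rel q = (\<lambda>(x,y). (f x, f y)) ` Rel p"
proof -
  assume pP: "p \<in> PP" and qP: "q \<in> PP" and iso: "isoP p q f"
  interpret P: fam_p m L t p using fam_p_intro pP by simp
  interpret Q: fam_p m L t q using fam_p_intro qP by simp
  have f: "bij_betw f {..<NN} {..<NN}" and fi: "\<forall>x<NN. \<forall>y<NN. (x,y) \<in> Rel p \<longleftrightarrow> (f x, f y) \<in> Rel q"
    using iso unfolding isoP_def by auto
  show ?thesis
  proof (rule set_eqI, rule iffI)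
    fix z assume z: "z \<in> Rel q"
    obtain u v where uv: "z = (u, v)" by (cases z)
    have uv2: "(u, v) \<in> {..<NN} \<times> {..<NN}" using z uv Q.R_sub by blast
    have "u \<in> f ` {..<NN}" using f uv2 unfolding bij_betw_def by simp
    then obtain x where x: "x < NN" "f x = u" by auto
    have "v \<in> f ` {..<NN}" using f uv2 unfolding bij_betw_def by simp
    then obtain y where y: "y < NN" "f y = v" by auto
    have "(x, y) \<in> Rel p" using fi x y z uv by simp
    moreover have "z = (\<lambda>(x,y). (f x, f y)) (x, y)" using x y uv by simp
    ultimately show "z \<in> (\<lambda>(x,y). (f x, f y)) ` Rel p" by (rule rev_image_eqI)
  next
    fix z assume "z \<in> (\<lambda>(x,y). (f x, f y)) ` Rel p"
    then obtain x y where xy: "(x, y) \<in> Rel p" "z = (f x, f y)" by auto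
    have "(x, y) \<in> {..<NN} \<times> {..<NN}" using xy P.R_sub by blast
    then show "z \<in> Rel q" using fi xy by simp
  qed
qed

lemma fiber_bound:
  assumes c: "c \<in> (\<lambda>R. {R' \<in> semimod_lattices NN. order_iso NN R R'}) ` semimod_lattices NN"
  shows "card {p \<in> PP. Rel p \<in> c} \<le> card GG"
proof (cases "{p \<in> PP. Rel p \<in> c} = {}")
  case True show ?thesis unfolding True by simp
next
  case False
  then obtain p0 where p0: "p0 \<in> PP" "Rel p0 \<in> c" by auto
  obtain R0 where R0: "c = {R' \<in> semimod_lattices NN. order_iso NN R0 R'}" using c by auto
  have ex: "\<exists>f. isoP p0 p f" if p: "p \<in> PP" "Rel p \<in> c" for p
  proof -
    obtain f1 where f1: "bij_betw f1 {..<NN} {..<NN}" "\<forall>x<NN. \<forall>y<NN. (x, y) \<in> R0 \<longleftrightarrow> (f1 x, f1 y) \<in> Rel p0"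
      using p0 R0 unfolding order_iso_def by auto
    obtain f2 where f2: "bij_betw f2 {..<NN} {..<NN}" "\<forall>x<NN. \<forall>y<NN. (x, y) \<in> R0 \<longleftrightarrow> (f2 x, f2 y) \<in> Rel p"
      using p R0 unfolding order_iso_def by auto
    let ?h = "inv_into {..<NN} f1"
    have h: "bij_betw ?h {..<NN} {..<NN}" using bij_betw_inv_into[OF f1(1)] .
    have hl: "x < NN \<Longrightarrow> ?h x < NN" for x using h unfolding bij_betw_def by auto
    have hr: "x < NN \<Longrightarrow> f1 (?h x) = x" for x using bij_betw_inv_into_right[OF f1(1)] by simp
    have "isoP p0 p (f2 \<circ> ?h)"
      unfolding isoP_def
    proof (intro conjI allI impI)
      show "bij_betw (f2 \<circ> ?h) {..<NN} {..<NN}" using bij_betw_trans[OF h f2(1)] .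
      fix x y assume x: "x < NN" and y: "y < NN"
      have "(x, y) \<in> Rel p0 \<longleftrightarrow> (f1 (?h x), f1 (?h y)) \<in> Rel p0" using hr x y by simp
      also have "\<dots> \<longleftrightarrow> (?h x, ?h y) \<in> R0" using f1(2) hl x y by simp
      also have "\<dots> \<longleftrightarrow> (f2 (?h x), f2 (?h y)) \<in> Rel p" using f2(2) hl x y by simp
      finally show "(x, y) \<in> Rel p0 \<longleftrightarrow> ((f2 \<circ> ?h) x, (f2 \<circ> ?h) y) \<in> Rel p" by simp
    qed
    then show ?thesis by blast
  qed
  define g where "g p = restrict (SOME f. isoP p0 p f) {..<NN}" for p
  have giso: "isoP p0 p (g p)" if p: "p \<in> PP" "Rel p \<in> c" for p
  proof -
    define F where "F = (SOME f. isoP p0 p f)"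
    have i0: "isoP p0 p F" unfolding F_def using someI_ex[OF ex[OF p]] .
    have gF: "g p = restrict F {..<NN}" unfolding g_def F_def by simp
    have b: "bij_betw (g p) {..<NN} {..<NN}"
      using i0 unfolding isoP_def gF by (subst bij_betw_cong[where g=F]) auto
    have r: "\<forall>x<NN. \<forall>y<NN. (x,y) \<in> Rel p0 \<longleftrightarrow> (g p x, g p y) \<in> Rel p"
      using i0 unfolding isoP_def gF by simp
    show ?thesis unfolding isoP_def using b r by simp
  qed
  have gG: "g p \<in> GG" if p: "p \<in> PP" "Rel p \<in> c" for p
  proof -
    have i: "isoP p0 p (g p)" using giso p by simp
    have im: "g p ` {..<NN} = {..<NN}" using i unfolding isoP_def bij_betw_def by simp
    have "\<forall>x\<in>{..<NN}. g p x \<in> {..<NN}"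
    proof
      fix x assume "x \<in> {..<NN}"
      then have "g p x \<in> g p ` {..<NN}" by (rule imageI)
      then show "g p x \<in> {..<NN}" using im by simp
    qed
    moreover have "g p \<in> extensional {..<NN}" unfolding g_def by simp
    ultimately have "g p \<in> {..<NN} \<rightarrow>\<^sub>E {..<NN}" by (simp add: PiE_iff)
    moreover have "\<forall>x<NN. lev (g p x) = lev x" using iso_lev[OF p0(1) p(1) i] by simp
    moreover have "\<forall>k\<in>{2..L}. g p (sp k) = sp k" using iso_sp[OF p0(1) p(1) i] by simp
    ultimately show ?thesis using i unfolding GG_def isoP_def by simp
  qed
  have ginj: "inj_on g {p \<in> PP. Rel p \<in> c}"
  proof (rule inj_onI)
    fix p q assume p: "p \<in> {p \<in> PP. Rel p \<in> c}" and q: "q \<in> {p \<in> PP. Rel p \<in> c}" and e: "g p = g q"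
    have "Rel p = (\<lambda>(x,y). (g p x, g p y)) ` Rel p0" using rel_image[OF p0(1) _ giso] p by simp
    also have "\<dots> = (\<lambda>(x,y). (g q x, g q y)) ` Rel p0" using e by simp
    also have "\<dots> = Rel q" using rel_image[OF p0(1) _ giso] q by simp
    finally show "p = q" using Rel_inj p q by simp
  qed
  have finG: "finite GG"
  proof (rule finite_subset)
    show "GG \<subseteq> {..<NN} \<rightarrow>\<^sub>E {..<NN}" unfolding GG_def by auto
    show "finite ({..<NN} \<rightarrow>\<^sub>E {..<NN})" by (rule finite_PiE) auto
  qed
  show ?thesis using card_inj_on_le[OF ginj _ finG] gG by auto
qed

lemma count_bound: "card PP \<le> s_count NN * card GG"
proof -
  let ?S = "semimod_lattices NN"
  let ?cls = "\<lambda>R. {R' \<in> ?S. order_iso NN R R'}"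
  have finS: "finite ?S"
  proof (rule finite_subset)
    show "?S \<subseteq> Pow ({..<NN} \<times> {..<NN})"
      unfolding semimod_lattices_def semimodular_lattice_def lattice_order_def by auto
  qed auto
  have finC: "finite (?cls ` ?S)" using finS by simp
  have relS: "Rel p \<in> ?S" if "p \<in> PP" for p
  proof -
    interpret P: fam_p m L t p using fam_p_intro that by simp
    show ?thesis unfolding semimod_lattices_def using P.semimod by simp
  qed
  have refl: "order_iso NN R R" for R
    unfolding order_iso_def by (intro exI[of _ id]) auto
  have "PP \<subseteq> (\<Union>c\<in>?cls ` ?S. {p \<in> PP. Rel p \<in> c})"
  proof
    fix p assume p: "p \<in> PP"
    then have "Rel p \<in> ?cls (Rel p)" using relS refl by simp
    then show "p \<in> (\<Union>c\<in>?cls ` ?S. {p \<in> PP. Rel p \<in> c})" using p relS by blast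
  qed
  moreover have "finite (\<Union>c\<in>?cls ` ?S. {p \<in> PP. Rel p \<in> c})"
  proof (rule finite_subset)
    show "(\<Union>c\<in>?cls ` ?S. {p \<in> PP. Rel p \<in> c}) \<subseteq> PP" by blast
    show "finite PP" unfolding PP_def
      by (rule finite_PiE) (auto simp: DD_def AA_fin LS_def)
  qed
  ultimately have "card PP \<le> card (\<Union>c\<in>?cls ` ?S. {p \<in> PP. Rel p \<in> c})"
    by (intro card_mono)
  also have "\<dots> \<le> (\<Sum>c\<in>?cls ` ?S. card {p \<in> PP. Rel p \<in> c})" by (rule card_UN_le[OF finC])
  also have "\<dots> \<le> (\<Sum>c\<in>?cls ` ?S. card GG)" by (rule sum_mono) (rule fiber_bound)
  also have "\<dots> = s_count NN * card GG" unfolding s_count_def by simp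
  finally show ?thesis .
qed

lemma final_fam: "real (m ^ ((L-1)*(m-1))) \<le> real (s_count NN) * (fact m * fact (m-1) ^ (L-1))"
proof -
  have "m ^ ((L-1)*(m-1)) \<le> s_count NN * (fact m * fact (m-1) ^ (L-1))"
    using count_bound card_PP card_GG by (metis dual_order.trans mult_le_mono2)
  then have "real (m ^ ((L-1)*(m-1))) \<le> real (s_count NN * (fact m * fact (m-1) ^ (L-1)))"
    by (simp only: of_nat_le_iff)
  then show ?thesis by simp
qed

end

lemma numeric: "(2.5080::real) ^ 40 \<le> 40 ^ 39 / fact 39"
proof -
  have n: "(2508::nat)^40 * fact 39 \<le> 40^39 * 1000^40" by (simp add: fact_numeral)
  then have "real ((2508::nat)^40 * fact 39) \<le> real ((40::nat)^39 * 1000^40)" by (simp only: of_nat_le_iff)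
  then have r: "(2508::real)^40 * fact 39 \<le> 40^39 * 1000^40" by simp
  have "(2.5080::real) ^ 40 = 2508^40 / 1000^40" by (simp add: power_divide)
  also have "\<dots> \<le> 40 ^ 39 / fact 39"
    using r by (simp add: divide_le_eq le_divide_eq field_simps)
  finally show ?thesis .
qed

theorem corollary2p5:
  shows "\<exists>b::real. b > 0 \<and> (\<exists>N. \<forall>n\<ge>N. b * (2.5080::real) ^ n \<le> real (s_count n))"
proof -
  define c :: real where "c = 2.5080"
  define b :: real where "b = 1 / (fact 40 * c ^ 81)"
  have c1: "1 \<le> c" unfolding c_def by simp
  have bpos: "b > 0" unfolding b_def c_def by simp
  have main: "b * c ^ n \<le> real (s_count n)" if n: "n \<ge> 42" for n
  proof -
    define L where "L = (n - 2) div 40"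
    define t where "t = n - 1 - L * 40"
    have L1: "1 \<le> L" unfolding L_def using n by simp
    have A: "L * 40 \<le> n - 2" unfolding L_def by simp
    have B: "n - 2 < (L + 1) * 40" unfolding L_def by simp
    have t1: "1 \<le> t" unfolding t_def using A n by simp
    have nE: "n = 1 + L*40 + t" unfolding t_def using A n by simp
    have nle: "n \<le> 40 * (L - 1) + 81" using nE B t_def L1 by simp
    interpret F: fam 40 L t by unfold_locales (use L1 t1 in auto)
    have NNn: "F.NN = n" unfolding F.NN_def using nE by simp
    have fb: "real (40 ^ ((L-1)*(40-1))) \<le> real (s_count n) * (fact 40 * fact (40-1) ^ (L-1))"
      using F.final_fam NNn by simp
    define X :: real where "X = 40 ^ 39 / fact 39"
    have cX: "c ^ 40 \<le> X" unfolding c_def X_def using numeric by simp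
    have xf: "X * fact 39 = 40 ^ 39" unfolding X_def by simp
    have e0: "(40::nat) ^ ((L-1)*(40-1)) = (40^39)^(L-1)"
    proof -
      have "(L-1)*(40-1) = 39*(L-1)" by simp
      then show ?thesis by (simp only: power_mult)
    qed
    have rx: "(real 40)^39 = X * fact 39" using xf by simp
    have e1: "real (40 ^ ((L-1)*(40-1))) = X ^ (L-1) * (fact 39) ^ (L-1)"
      by (simp only: e0 of_nat_power rx power_mult_distrib)
    have pos39: "(0::real) < fact 39 ^ (L-1)" by simp
    have "X ^ (L-1) * (fact 39) ^ (L-1) \<le> real (s_count n) * fact 40 * fact 39 ^ (L-1)"
      using fb e1 by (simp add: mult.assoc)
    then have s1: "X ^ (L-1) \<le> real (s_count n) * fact 40"
      using pos39 by (simp add: mult_le_cancel_right)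
    have s2: "(c ^ 40) ^ (L-1) \<le> X ^ (L-1)"
      by (rule power_mono[OF cX]) (simp add: c_def)
    have s3: "c ^ n \<le> c ^ (40 * (L - 1) + 81)" by (rule power_increasing[OF nle c1])
    have s4: "c ^ (40 * (L - 1) + 81) = (c ^ 40) ^ (L-1) * c ^ 81" by (simp add: power_add power_mult)
    have cpos: "0 < c ^ 81" unfolding c_def by simp
    have "b * c ^ n \<le> b * ((c ^ 40) ^ (L-1) * c ^ 81)"
      using s3 s4 bpos by simp
    also have "\<dots> = (c ^ 40) ^ (L-1) / fact 40" unfolding b_def using cpos by (simp add: field_simps)
    also have "\<dots> \<le> X ^ (L-1) / fact 40" using s2 by (simp add: divide_right_mono)
    also have "\<dots> \<le> real (s_count n)" using s1 by (simp add: divide_le_eq mult.commute)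
    finally show ?thesis .
  qed
  show ?thesis using bpos main unfolding c_def by blast
qed

end
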